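(* Assume the standing assumptions (a)–(d) below, and let $T\in(0,\infty)$, $\epsilon\in[0,\infty)$ satisfy $(L+2\epsilon\tilde L)T^2\le 1/4$ and $\epsilon\tilde L\le K/3$. Let $\bar\mu,\bar\mu'$ be probability measures on $\mathbb{R}^d$ and $\bar x,\bar x',\bar v,\bar v'\in\mathbb{R}^d$; let $(\bar x_t,\bar v_t)=(\bar q_t,\bar p_t)(\bar x,\bar v,\bar\mu)$ and $(\bar x'_t,\bar v'_t)=(\bar q_t,\bar p_t)(\bar x',\bar v',\bar\mu')$ be solutions of the distribution-dependent Hamiltonian dynamics. If $\bar v=\bar v'$, then for every family $(\kappa_s)_{0\le s\le T}$ where $\kappa_s$ is a coupling of $\bar\mu_s$ and $\bar\mu'_s$, $$|\bar x_T-\bar x'_T|^2\le\big(1-\tfrac5{12}KT^2\big)|\bar x-\bar x'|^2+\epsilon^2\tilde L^2T^4\Big(\frac76+\frac{3}{2KT^2}\Big)\max_{s\le T}\Big(\int|y-y'|\kappa_s(\mathrm{d}y\,\mathrm{d}y')\Big)^2+\hat CT^2,$$ where $\hat C=(2L+K)\mathcal R^2$.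
   Context: Standing assumptions: $V:\mathbb{R}^d\to\mathbb{R}$, $W:\mathbb{R}^d\times\mathbb{R}^d\to\mathbb{R}$ are $C^1$, $\nabla_1W$ the gradient in the first argument, constants $L>0,K>0,\mathcal R\ge0,\tilde L\ge0$ with: (a) $V(0)=0$, $V\ge0$; (b) $|\nabla V(x)-\nabla V(y)|\le L|x-y|$; (c) $\langle x-y,\nabla V(x)-\nabla V(y)\rangle\ge K|x-y|^2+L^{-1}|\nabla V(x)-\nabla V(y)|^2$ whenever $|x-y|\ge\mathcal R$; (d) $W$ symmetric, $|\nabla_1W(x,y)-\nabla_1W(\tilde x,\tilde y)|\le\tilde L(|x-\tilde x|+|y-\tilde y|)$. Distribution-dependent Hamiltonian dynamics: for $(x,v)\in\mathbb{R}^{2d}$ and a probability measure $\nu$, $(\bar q_t,\bar p_t)(x,v,\nu)$ solves $\dot{\bar q}_t=\bar p_t$, $\dot{\bar p}_t=-\nabla V(\bar q_t)-\epsilon\int\nabla_1W(\bar q_t,u)\nu_t(\mathrm{d}u)$, $(\bar q_0,\bar p_0)=(x,v)$, where $\nu_t=\mathrm{Law}(\bar q_t(\tilde x,\tilde v,\nu))$, $(\tilde x,\tilde v)\sim\nu\otimes\mathcal N(0,I_d)$. Thus $\bar\mu_s,\bar\mu'_s$ are these time-$s$ laws for $\nu=\bar\mu,\bar\mu'$. *)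

theory Defs
  imports "HOL-Probability.Probability"
begin

definition std_gauss :: "'a::euclidean_space measure" where
  "std_gauss = density lborel
     (\<lambda>x. ennreal ((2 * pi) powr (- real DIM('a) / 2) * exp (- (norm x)\<^sup>2 / 2)))"

definition dd_law :: "'a::euclidean_space measure \<Rightarrow> ('a \<Rightarrow> 'a \<Rightarrow> real \<Rightarrow> 'a) \<Rightarrow> real \<Rightarrow> 'a measure" where
  "dd_law \<nu> q t = distr (\<nu> \<Otimes>\<^sub>M std_gauss) borel (\<lambda>z. q (fst z) (snd z) t)"

text \<open>Measurability/integrability are part of the requirement that the law and the
  integral are meaningful.\<close>
definition dd_flow ::
  "('a::euclidean_space \<Rightarrow> 'a) \<Rightarrow> ('a \<Rightarrow> 'a \<Rightarrow> 'a) \<Rightarrow> real \<Rightarrow> 'a measure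
    \<Rightarrow> ('a \<Rightarrow> 'a \<Rightarrow> real \<Rightarrow> 'a) \<Rightarrow> ('a \<Rightarrow> 'a \<Rightarrow> real \<Rightarrow> 'a) \<Rightarrow> bool" where
  "dd_flow gV gW1 \<epsilon> \<nu> q p \<longleftrightarrow>
     (\<forall>t\<ge>0. (\<lambda>z. q (fst z) (snd z) t) \<in> borel_measurable (borel \<Otimes>\<^sub>M borel)) \<and>
     (\<forall>x v. q x v 0 = x \<and> p x v 0 = v \<and>
       (\<forall>t\<ge>0. integrable (dd_law \<nu> q t) (\<lambda>u. gW1 (q x v t) u) \<and>
          (q x v has_vector_derivative p x v t) (at t within {0..}) \<and>
          (p x v has_vector_derivative
             (- gV (q x v t) - \<epsilon> *\<^sub>R (\<integral>u. gW1 (q x v t) u \<partial>dd_law \<nu> q t)))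
             (at t within {0..})))"

definition coupling :: "('a::euclidean_space \<times> 'a) measure \<Rightarrow> 'a measure \<Rightarrow> 'a measure \<Rightarrow> bool" where
  "coupling \<kappa> \<mu> \<mu>' \<longleftrightarrow> prob_space \<kappa> \<and> sets \<kappa> = sets (borel \<Otimes>\<^sub>M borel) \<and>
     distr \<kappa> borel fst = \<mu> \<and> distr \<kappa> borel snd = \<mu>'"

definition coupling_cost :: "('a::euclidean_space \<times> 'a) measure \<Rightarrow> ereal" where
  "coupling_cost \<kappa> = enn2ereal (\<integral>\<^sup>+ z. ennreal (norm (fst z - snd z)) \<partial>\<kappa>)"

end

theory Submission imports Defs begin
lemma alg_core:
  fixes kk bt omg :: real
  assumes kk: "kk > 0" and b0: "0 \<le> bt" and bk: "bt \<le> kk/3" and kb: "16*kk + 8*bt \<le> 1"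
    and o0: "0 \<le> omg" and ok: "omg \<le> 103/120 * kk"
  shows "(omg + 3*bt)^2 \<le> (23/8 + 9*bt - 3* omg - 15*kk) * (2*kk - 2*bt - omg - 10/27*kk)"
proof -
  define co :: real where "co = 103/120"
  define cq :: real where "cq = 2 - co - 10/27"
  have q0: "0 \<le> cq*kk - 2*bt" using bk kk unfolding cq_def co_def by simp
  have H: "(23/8)*(cq*kk - 2*bt)*(16*kk+8*bt) - (3*co+15)*kk*(cq*kk - 2*bt) + 9*bt*(cq*kk - 2*bt) - (co*kk + 3*bt)^2
      = 152549/7200 * (kk*(kk-3*bt)) + 3*(41261/64800)*(kk*bt) + 73*(bt*(kk/3-bt))"
    unfolding cq_def co_def by (simp add: field_simps power2_eq_square)
  have h1: "0 \<le> kk*(kk-3*bt)" using kk bk by simp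
  have h2: "0 \<le> kk*bt" using kk b0 by simp
  have h3: "0 \<le> bt*(kk/3-bt)" using b0 bk by simp
  have Hpos: "0 \<le> (23/8)*(cq*kk - 2*bt)*(16*kk+8*bt) - (3*co+15)*kk*(cq*kk - 2*bt) + 9*bt*(cq*kk - 2*bt) - (co*kk + 3*bt)^2"
    unfolding H using h1 h2 h3 by simp
  have s1: "(23/8)*(cq*kk - 2*bt)*(16*kk+8*bt) \<le> (23/8)*(cq*kk - 2*bt)"
    using q0 kb by (simp add: mult_left_le)
  have E: "(23/8 - (3*co+15)*kk + 9*bt) * (cq*kk - 2*bt) - (co*kk + 3*bt)^2
      = ((23/8)*(cq*kk - 2*bt)*(16*kk+8*bt) - (3*co+15)*kk*(cq*kk - 2*bt) + 9*bt*(cq*kk - 2*bt) - (co*kk + 3*bt)^2)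
        + (23/8)*((cq*kk - 2*bt)*(1 - (16*kk+8*bt)))"
    by (simp add: field_simps power2_eq_square)
  have s2: "0 \<le> (cq*kk - 2*bt)*(1 - (16*kk+8*bt))" using q0 kb by simp
  have F: "(co*kk + 3*bt)^2 \<le> (23/8 - (3*co+15)*kk + 9*bt) * (cq*kk - 2*bt)"
    using E Hpos s2 by linarith
  have lhs: "(omg + 3*bt)^2 \<le> (co*kk + 3*bt)^2"
    using o0 ok b0 unfolding co_def by (intro power_mono) auto
  have f1: "0 \<le> 23/8 - (3*co+15)*kk + 9*bt" using kb kk b0 unfolding co_def by simp
  have m1: "23/8 - (3*co+15)*kk + 9*bt \<le> 23/8 + 9*bt - 3* omg - 15*kk" using ok unfolding co_def by simp
  have m2: "cq*kk - 2*bt \<le> 2*kk - 2*bt - omg - 10/27*kk" using ok unfolding cq_def co_def by simp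
  have "(23/8 - (3*co+15)*kk + 9*bt) * (cq*kk - 2*bt) \<le> (23/8 + 9*bt - 3* omg - 15*kk) * (2*kk - 2*bt - omg - 10/27*kk)"
    using f1 q0 m1 m2 by (intro mult_mono) auto
  then show ?thesis using lhs F by linarith
qed

lemma quad2:
  fixes P Q c x y :: real
  assumes "P \<ge> 0" "Q \<ge> 0" "c^2 \<le> P*Q"
  shows "2*c*x*y \<le> P*x^2 + Q*y^2"
proof (cases "P = 0")
  case True
  then have "c = 0" using assms by simp
  then show ?thesis using assms True by simp
next
  case False
  then have P: "P > 0" using assms by simp
  have "P*(P*x^2 + Q*y^2 - 2*c*x*y) = (P*x - c*y)^2 + (P*Q - c^2)*y^2"
    by (simp add: algebra_simps power2_eq_square)
  also have "\<dots> \<ge> 0" using assms by simp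
  finally have "P*(P*x^2 + Q*y^2 - 2*c*x*y) \<ge> 0" .
  then have "P*x^2 + Q*y^2 - 2*c*x*y \<ge> 0" using P by (simp add: zero_le_mult_iff)
  then show ?thesis by simp
qed

lemma pointwise:
  fixes z w a b :: "'a::real_inner"
  assumes K: "K > 0" and L: "L > 0" and T: "T > 0" and be: "\<beta> \<ge> 0" and M: "M \<ge> 0"
    and r0: "0 \<le> \<rho>" and rT: "\<rho> \<le> T"
    and step: "(L + 2*\<beta>) * T^2 \<le> 1/4" and bK: "\<beta> \<le> K/3" and KL: "K \<le> L/4"
    and za: "z \<bullet> a \<ge> K*(norm z)^2 + (norm a)^2/L - C0"
    and bb: "norm b \<le> \<beta>*(norm z + M)"
    and om: "\<omega> = 5*K/6 + 2*K^2*T^2/5"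
  shows "-4*\<rho>*(w \<bullet> w) + 2*\<rho>*(z \<bullet> (-(a+b))) + 6*\<rho>^2*(w \<bullet> (-(a+b)))
          + \<omega>*\<rho>*(z \<bullet> z + 2*\<rho>*(z \<bullet> w) + 3*\<rho>^2*(w \<bullet> w))
        \<le> \<rho>*(2*C0 + \<beta>^2*M^2*(27/(10*K) + \<rho>^2*(14/3 + 3/(5*K*T^2))))"
proof -
  define Z where "Z = norm z"
  define W where "W = norm w"
  define A where "A = norm a"
  define B where "B = norm b"
  have Z0: "Z \<ge> 0" and W0: "W \<ge> 0" and A0: "A \<ge> 0" and B0: "B \<ge> 0"
    unfolding Z_def W_def A_def B_def by auto
  have zz: "z \<bullet> z = Z^2" and ww: "w \<bullet> w = W^2" unfolding Z_def W_def by (simp_all add: power2_norm_eq_inner)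
  have cs1: "-(z \<bullet> b) \<le> Z*B" unfolding Z_def B_def
    by (metis Cauchy_Schwarz_ineq2 abs_le_iff minus_le_iff)
  have cs2: "-(w \<bullet> a) \<le> W*A" unfolding W_def A_def
    by (metis Cauchy_Schwarz_ineq2 abs_le_iff minus_le_iff)
  have cs3: "-(w \<bullet> b) \<le> W*B" unfolding W_def B_def
    by (metis Cauchy_Schwarz_ineq2 abs_le_iff minus_le_iff)
  have cs4: "z \<bullet> w \<le> Z*W" unfolding Z_def W_def
    by (metis Cauchy_Schwarz_ineq2 abs_le_iff)
  have za': "z \<bullet> a \<ge> K*Z^2 + A^2/L - C0" using za unfolding Z_def A_def .
  have bb': "B \<le> \<beta>*(Z + M)" using bb unfolding Z_def B_def .
  have kT: "K*T^2 \<le> 1/16"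
  proof -
    have "L*T^2 \<le> 1/4" using step be T by (smt (verit) mult_right_mono zero_le_power2)
    moreover have "K*T^2 \<le> L/4*T^2" using KL by (intro mult_right_mono) auto
    ultimately show ?thesis by simp
  qed
  have om0: "\<omega> \<ge> 0" using om K by simp
  define P where "P = 4 - 9/2*L*\<rho>^2 - 3*\<omega>*\<rho>^2 - 15*K*T^2"
  define Q where "Q = 2*K - 2*\<beta> - \<omega> - 10/27*K"
  define c where "c = \<rho>*(3*\<beta> + \<omega>)"
  have key: "c^2 \<le> P*Q \<and> P \<ge> 0 \<and> Q \<ge> 0"
  proof -
    define kk where "kk = K*T^2"
    define bt where "bt = \<beta>*T^2"
    define omg where "omg = \<omega>*T^2"
    define u where "u = L*T^2"
    have T2: "T^2 > 0" using T by simp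
    have kk0: "kk > 0" unfolding kk_def using K T by simp
    have bt0: "0 \<le> bt" unfolding bt_def using be by simp
    have btk: "bt \<le> kk/3" unfolding bt_def kk_def using bK T2 by (simp add: mult_right_mono)
    have ub: "u + 2*bt \<le> 1/4" unfolding u_def bt_def using step by (simp add: algebra_simps)
    have ku: "kk \<le> u/4" unfolding kk_def u_def using KL T2 by (simp add: mult_right_mono)
    have kb: "16*kk + 8*bt \<le> 1" using ub ku by simp
    have k16: "kk \<le> 1/16" using kT unfolding kk_def .
    have omgk: "omg = 5*kk/6 + 2*kk^2/5" unfolding omg_def kk_def om by (simp add: algebra_simps power2_eq_square)
    have o0: "0 \<le> omg" using omgk kk0 by simp
    have ok: "omg \<le> 103/120 * kk"
    proof -
      have "2*kk^2/5 \<le> kk/40" using k16 kk0 by (simp add: power2_eq_square)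
      then show ?thesis using omgk by simp
    qed
    have core: "(omg + 3*bt)^2 \<le> (23/8 + 9*bt - 3* omg - 15*kk) * (2*kk - 2*bt - omg - 10/27*kk)"
      by (rule alg_core[OF kk0 bt0 btk kb o0 ok])
    have QT: "Q*T^2 = 2*kk - 2*bt - omg - 10/27*kk" unfolding Q_def kk_def bt_def omg_def by (simp add: algebra_simps)
    define PT where "PT = 4 - 9/2*u - 3* omg - 15*kk"
    have PT1: "23/8 + 9*bt - 3* omg - 15*kk \<le> PT" unfolding PT_def using ub by simp
    have QT0: "0 \<le> 2*kk - 2*bt - omg - 10/27*kk" using btk ok kk0 by simp
    have PT0: "0 \<le> 23/8 + 9*bt - 3* omg - 15*kk" using ok k16 bt0 kk0 by simp
    have core2: "(omg + 3*bt)^2 \<le> PT * (Q*T^2)"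
      using core PT1 QT0 QT by (metis mult_right_mono order_trans)
    have Q0: "Q \<ge> 0" using QT0 QT T2 by (metis zero_le_mult_iff not_less) 
    have r2: "\<rho>^2 \<le> T^2" using r0 rT by (simp add: power_mono)
    have PPT: "PT \<le> P*T^2/T^2"
    proof -
      have "9/2*L*\<rho>^2 \<le> 9/2*L*T^2" using r2 L by simp
      moreover have "3*\<omega>*\<rho>^2 \<le> 3*\<omega>*T^2" using r2 om0 by (simp add: mult_left_mono)
      ultimately show ?thesis unfolding PT_def P_def u_def omg_def kk_def using T2 by simp
    qed
    have PT0': "PT \<ge> 0" using PT0 PT1 by simp
    have P0: "P \<ge> 0" using PPT PT0' T2 by simp
    have PPT': "PT \<le> P" using PPT T2 by simp
    have "c^2 * (T^2 * T^2) = (omg + 3*bt)^2 * \<rho>^2"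
      unfolding c_def omg_def bt_def by (simp add: power2_eq_square algebra_simps)
    also have "\<dots> \<le> (omg + 3*bt)^2 * T^2" using r2 by (simp add: mult_left_mono)
    also have "\<dots> \<le> PT * (Q*T^2) * T^2" using core2 T2 by (simp add: mult_right_mono)
    also have "\<dots> \<le> P * (Q*T^2) * T^2"
      using PPT' Q0 T2 by (intro mult_right_mono) (auto intro: mult_right_mono)
    also have "\<dots> = P*Q*(T^2*T^2)" by (simp add: algebra_simps)
    finally have "c^2 * (T^2 * T^2) \<le> P*Q*(T^2*T^2)" .
    then have "c^2 \<le> P*Q" using T2 by simp
    then show ?thesis using P0 Q0 by simp
  qed
  have P0: "P \<ge> 0" and Q0: "Q \<ge> 0" and cPQ: "c^2 \<le> P*Q" using key by auto
  have e9: "2*c*W*Z \<le> P*W^2 + Q*Z^2" by (rule quad2[OF P0 Q0 cPQ])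
  have e1: "z \<bullet> (-(a+b)) = -(z \<bullet> a) - (z \<bullet> b)" "w \<bullet> (-(a+b)) = -(w \<bullet> a) - (w \<bullet> b)"
    by (simp_all add: inner_add_right inner_diff_right)
  have e3: "-(z \<bullet> b) \<le> \<beta>*Z*Z + \<beta>*Z*M"
  proof -
    have "Z*B \<le> Z*(\<beta>*(Z+M))" using bb' Z0 by (simp add: mult_left_mono)
    then show ?thesis using cs1 by (simp add: algebra_simps)
  qed
  have e4: "6*\<rho>*(-(w \<bullet> a)) \<le> 2*A^2/L + 9/2*L*\<rho>^2*W^2"
  proof -
    have "6*\<rho>*(-(w \<bullet> a)) \<le> 6*\<rho>*(W*A)" using cs2 r0 by (intro mult_left_mono) auto
    also have "\<dots> \<le> 2*A^2/L + 9/2*L*\<rho>^2*W^2"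
    proof -
      have "0 \<le> (2/L)*(A - 3/2*L*\<rho>*W)^2" using L by simp
      also have "(2/L)*(A - 3/2*L*\<rho>*W)^2 = 2*A^2/L + 9/2*L*\<rho>^2*W^2 - 6*\<rho>*(W*A)"
        using L by (simp add: power2_eq_square field_simps)
      finally show ?thesis by simp
    qed
    finally show ?thesis .
  qed
  have e5: "6*\<rho>*(-(w \<bullet> b)) \<le> 6*\<rho>*\<beta>*W*Z + 6*\<rho>*\<beta>*W*M"
  proof -
    have "W*B \<le> W*(\<beta>*(Z+M))" using bb' W0 by (simp add: mult_left_mono)
    then have "-(w \<bullet> b) \<le> \<beta>*W*Z + \<beta>*W*M" using cs3 by (simp add: algebra_simps)
    then have "6*\<rho>*(-(w \<bullet> b)) \<le> 6*\<rho>*(\<beta>*W*Z + \<beta>*W*M)" using r0 by (intro mult_left_mono) auto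
    then show ?thesis by (simp add: algebra_simps)
  qed
  have e6: "\<omega>*(2*\<rho>*(z \<bullet> w)) \<le> 2*\<omega>*\<rho>*Z*W"
  proof -
    have "\<omega>*(2*\<rho>)*(z \<bullet> w) \<le> \<omega>*(2*\<rho>)*(Z*W)" using cs4 om0 r0 by (simp add: mult_left_mono)
    then show ?thesis by (simp add: algebra_simps)
  qed
  have e7: "2*\<beta>*Z*M \<le> 10*K/27*Z^2 + 27/(10*K)*\<beta>^2*M^2"
  proof -
    have "0 \<le> (10*K/27)*(Z - 27/(10*K)*\<beta>*M)^2" using K by simp
    also have "(10*K/27)*(Z - 27/(10*K)*\<beta>*M)^2 = 10*K/27*Z^2 + 27/(10*K)*\<beta>^2*M^2 - 2*\<beta>*Z*M"
      using K by (simp add: power2_eq_square field_simps)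
    finally show ?thesis by simp
  qed
  have e8: "6*\<rho>*\<beta>*W*M \<le> 15*K*T^2*W^2 + \<beta>^2*M^2*(\<rho>^2*(14/3 + 3/(5*K*T^2)))"
  proof -
    have "0 \<le> (15*K*T^2)*(W - \<rho>*\<beta>*M/(5*K*T^2))^2" using K by simp
    also have "(15*K*T^2)*(W - \<rho>*\<beta>*M/(5*K*T^2))^2 = 15*K*T^2*W^2 + \<beta>^2*M^2*(\<rho>^2*(3/(5*K*T^2))) - 6*\<rho>*\<beta>*W*M"
      using K T by (simp add: power2_eq_square field_simps)
    finally have "6*\<rho>*\<beta>*W*M \<le> 15*K*T^2*W^2 + \<beta>^2*M^2*(\<rho>^2*(3/(5*K*T^2)))" by simp
    moreover have "0 \<le> \<beta>^2*M^2*(\<rho>^2*(14/3))" by simp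
    moreover have "\<beta>^2*M^2*(\<rho>^2*(14/3 + 3/(5*K*T^2))) = \<beta>^2*M^2*(\<rho>^2*(3/(5*K*T^2))) + \<beta>^2*M^2*(\<rho>^2*(14/3))"
      by (simp add: algebra_simps)
    ultimately show ?thesis by linarith
  qed
  have main: "-4*W^2 + 2*(z \<bullet> (-(a+b))) + 6*\<rho>*(w \<bullet> (-(a+b))) + \<omega>*(Z^2 + 2*\<rho>*(z \<bullet> w) + 3*\<rho>^2*W^2)
     \<le> 2*C0 + \<beta>^2*M^2*(27/(10*K) + \<rho>^2*(14/3 + 3/(5*K*T^2)))"
  proof -
    have eq9: "P*W^2 + Q*Z^2 - 2*c*W*Z = (4 - 9/2*L*\<rho>^2 - 3*\<omega>*\<rho>^2 - 15*K*T^2)*W^2 + (2*K - 2*\<beta> - \<omega> - 10/27*K)*Z^2 - 2*\<rho>*(3*\<beta> + \<omega>)*W*Z"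
      unfolding P_def Q_def c_def by simp
    have e2: "-(z \<bullet> a) \<le> -(K*Z^2) - A^2/L + C0" using za' by simp
    show ?thesis using e1 e2 e3 e4 e5 e6 e7 e8 e9 eq9
      by (simp add: algebra_simps power2_eq_square) linarith?
  qed
  have "-4*\<rho>*(w \<bullet> w) + 2*\<rho>*(z \<bullet> (-(a+b))) + 6*\<rho>^2*(w \<bullet> (-(a+b)))
          + \<omega>*\<rho>*(z \<bullet> z + 2*\<rho>*(z \<bullet> w) + 3*\<rho>^2*(w \<bullet> w))
     = \<rho> * (-4*W^2 + 2*(z \<bullet> (-(a+b))) + 6*\<rho>*(w \<bullet> (-(a+b))) + \<omega>*(Z^2 + 2*\<rho>*(z \<bullet> w) + 3*\<rho>^2*W^2))"
    unfolding zz ww by (simp add: algebra_simps power2_eq_square)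
  also have "\<dots> \<le> \<rho>*(2*C0 + \<beta>^2*M^2*(27/(10*K) + \<rho>^2*(14/3 + 3/(5*K*T^2))))"
    by (rule mult_left_mono[OF main r0])
  finally show ?thesis .
qed

lemma inner_vd:
  fixes f g :: "real \<Rightarrow> 'a::real_inner"
  assumes "(f has_vector_derivative f') (at t within S)" "(g has_vector_derivative g') (at t within S)"
  shows "((\<lambda>t. f t \<bullet> g t) has_real_derivative (f t \<bullet> g' + f' \<bullet> g t)) (at t within S)"
proof -
  have "((\<lambda>t. f t \<bullet> g t) has_derivative (\<lambda>h. f t \<bullet> (h *\<^sub>R g') + (h *\<^sub>R f') \<bullet> g t)) (at t within S)"
    using has_derivative_inner[OF assms[unfolded has_vector_derivative_def]] .
  then show ?thesis unfolding has_field_derivative_def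
    by (rule has_derivative_eq_rhs) (auto simp: algebra_simps fun_eq_iff)
qed

lemma ode_bound:
  fixes z w a b :: "real \<Rightarrow> 'a::real_inner"
  assumes K: "K > 0" and L: "L > 0" and T: "T > 0" and be: "\<beta> \<ge> 0" and M: "M \<ge> 0" and C0: "C0 \<ge> 0"
    and step: "(L + 2*\<beta>) * T^2 \<le> 1/4" and bK: "\<beta> \<le> K/3" and KL: "K \<le> L/4"
    and dz: "\<And>t. t \<in> {0..T} \<Longrightarrow> (z has_vector_derivative w t) (at t within {0..})"
    and dw: "\<And>t. t \<in> {0..T} \<Longrightarrow> (w has_vector_derivative (-(a t + b t))) (at t within {0..})"
    and w0: "w 0 = 0"
    and za: "\<And>t. t \<in> {0..T} \<Longrightarrow> z t \<bullet> a t \<ge> K*(norm (z t))^2 + (norm (a t))^2/L - C0"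
    and bb: "\<And>t. t \<in> {0..T} \<Longrightarrow> norm (b t) \<le> \<beta>*(norm (z t) + M)"
  shows "(norm (z T))^2 \<le> (1 - 5/12*K*T^2)*(norm (z 0))^2 + \<beta>^2*M^2*(7*T^4/6 + 3*T^2/(2*K)) + C0*T^2"
proof -
  define \<omega> where "\<omega> = 5*K/6 + 2*K^2*T^2/5"
  define c1 where "c1 = 14/3 + 3/(5*K*T^2)"
  define c0 where "c0 = 2*C0 + \<beta>^2*M^2*(27/(10*K))"
  define PhiF where "PhiF = (\<lambda>t. z t \<bullet> z t + 2*(T-t)*(z t \<bullet> w t) + 3*(T-t)^2*(w t \<bullet> w t))"
  define PiF where "PiF = (\<lambda>t::real. c0*(T*t - t^2/2) + \<beta>^2*M^2*c1*(T^4 - (T-t)^4)/4)"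
  define PsiF where "PsiF = (\<lambda>t. exp (\<omega>*(T*t - t^2/2)) * PhiF t - exp (\<omega>*(T^2/2)) * PiF t)"
  define w' where "w' = (\<lambda>t. -(a t + b t))"
  have om0: "\<omega> \<ge> 0" unfolding \<omega>_def using K by simp
  have dPhi: "(PhiF has_real_derivative
      (-4*(T-t)*(w t \<bullet> w t) + 2*(T-t)*(z t \<bullet> w' t) + 6*(T-t)^2*(w t \<bullet> w' t))) (at t within {0..})"
    if t: "t \<in> {0..T}" for t
  proof -
    have d1: "((\<lambda>t. z t \<bullet> z t) has_real_derivative (z t \<bullet> w t + w t \<bullet> z t)) (at t within {0..})"
      by (rule inner_vd[OF dz[OF t] dz[OF t]])
    have d2: "((\<lambda>t. z t \<bullet> w t) has_real_derivative (z t \<bullet> w' t + w t \<bullet> w t)) (at t within {0..})"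
      unfolding w'_def by (rule inner_vd[OF dz[OF t] dw[OF t]])
    have d3: "((\<lambda>t. w t \<bullet> w t) has_real_derivative (w t \<bullet> w' t + w' t \<bullet> w t)) (at t within {0..})"
      unfolding w'_def by (rule inner_vd[OF dw[OF t] dw[OF t]])
    show ?thesis unfolding PhiF_def
      apply (rule derivative_eq_intros d1 d2 d3 | simp)+
      apply (simp add: inner_commute algebra_simps power2_eq_square)
      done
  qed
  define S where "S = (\<lambda>t. c0 + \<beta>^2*M^2*c1*(T-t)^2)"
  define D where "D = (\<lambda>t. -4*(T-t)*(w t \<bullet> w t) + 2*(T-t)*(z t \<bullet> w' t) + 6*(T-t)^2*(w t \<bullet> w' t))"
  have dPsi: "(PsiF has_real_derivative
      (exp (\<omega>*(T*t - t^2/2)) * (\<omega>*(T-t)*PhiF t + D t) - exp (\<omega>*(T^2/2)) * ((T-t)*S t))) (at t within {0..})"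
    if t: "t \<in> {0..T}" for t
  proof -
    note dp = dPhi[OF t, folded D_def]
    show ?thesis unfolding PsiF_def PiF_def S_def
      apply (rule derivative_eq_intros dp | simp)+
      apply (simp add: D_def algebra_simps power2_eq_square power3_eq_cube)
      done
  qed
  have dneg: "exp (\<omega>*(T*t - t^2/2)) * (\<omega>*(T-t)*PhiF t + D t) - exp (\<omega>*(T^2/2)) * ((T-t)*S t) \<le> 0"
    if t: "t \<in> {0..T}" for t
  proof -
    have r0: "0 \<le> T - t" and rT: "T - t \<le> T" using t by auto
    have pw: "-4*(T-t)*(w t \<bullet> w t) + 2*(T-t)*(z t \<bullet> (-(a t + b t))) + 6*(T-t)^2*(w t \<bullet> (-(a t + b t)))
          + \<omega>*(T-t)*(z t \<bullet> z t + 2*(T-t)*(z t \<bullet> w t) + 3*(T-t)^2*(w t \<bullet> w t))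
        \<le> (T-t)*(2*C0 + \<beta>^2*M^2*(27/(10*K) + (T-t)^2*(14/3 + 3/(5*K*T^2))))"
      by (rule pointwise[OF K L T be M r0 rT step bK KL za[OF t] bb[OF t] \<omega>_def])
    have e1: "\<omega>*(T-t)*PhiF t + D t \<le> (T-t)*S t"
      using pw unfolding PhiF_def D_def S_def w'_def c0_def c1_def by (simp add: algebra_simps)
    have S0: "0 \<le> (T-t)*S t" unfolding S_def c0_def c1_def using r0 C0 K T M by simp
    have g: "\<omega>*(T*t - t^2/2) \<le> \<omega>*(T^2/2)"
    proof -
      have "T*t - t^2/2 \<le> T^2/2" using sum_power2_ge_zero[of "T - t" 0] by (simp add: power2_eq_square algebra_simps)
      then show ?thesis using om0 by (intro mult_left_mono) auto
    qed
    have "exp (\<omega>*(T*t - t^2/2)) * (\<omega>*(T-t)*PhiF t + D t) \<le> exp (\<omega>*(T*t - t^2/2)) * ((T-t)*S t)"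
      using e1 by simp
    also have "\<dots> \<le> exp (\<omega>*(T^2/2)) * ((T-t)*S t)"
      using g S0 by (intro mult_right_mono) auto
    finally show ?thesis by simp
  qed
  have mono: "PsiF T \<le> PsiF 0"
  proof (rule DERIV_nonpos_imp_decreasing_open[of 0 T PsiF])
    show "0 \<le> T" using T by simp
    fix t assume "0 < t" "t < T"
    then have t: "t \<in> {0..T}" and ti: "t \<in> interior {0..}" by auto
    show "\<exists>y. (PsiF has_real_derivative y) (at t) \<and> y \<le> 0"
      using dPsi[OF t] dneg[OF t] at_within_interior[OF ti] by metis
  next
    show "continuous_on {0..T} PsiF"
    proof (clarsimp simp: continuous_on_eq_continuous_within)
      fix t assume "0 \<le> t" "t \<le> T"
      then have t: "t \<in> {0..T}" by auto
      have "continuous (at t within {0..}) PsiF" using DERIV_continuous[OF dPsi[OF t]] .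
      then show "continuous (at t within {0..T}) PsiF" by (rule continuous_within_subset) auto
    qed
  qed
  have Psi0: "PsiF 0 = (norm (z 0))^2"
    unfolding PsiF_def PhiF_def PiF_def using w0 by (simp add: power2_norm_eq_inner)
  define X where "X = \<omega>*(T^2/2)"
  have PsiT: "PsiF T = exp X * ((norm (z T))^2 - PiF T)"
    unfolding PsiF_def PhiF_def X_def by (simp add: power2_norm_eq_inner algebra_simps power2_eq_square norm_eq_sqrt_inner)
  have PiT: "PiF T = \<beta>^2*M^2*(7*T^4/6 + 3*T^2/(2*K)) + C0*T^2"
    unfolding PiF_def c0_def c1_def using K T by (simp add: field_simps power2_eq_square power4_eq_xxxx)
  have kk: "K*T^2 \<le> 1/16"
  proof -
    have "L*T^2 \<le> 1/4" using step be T by (smt (verit) mult_right_mono zero_le_power2)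
    moreover have "K*T^2 \<le> L/4*T^2" using KL by (intro mult_right_mono) auto
    ultimately show ?thesis by simp
  qed
  have X0: "X \<ge> 0" unfolding X_def using om0 by simp
  have expX: "1/exp X \<le> 1 - 5/12*K*T^2"
  proof -
    define k where "k = K*T^2"
    have k0: "0 < k" unfolding k_def using K T by simp
    have Xk: "X = 5*k/12 + k^2/5" unfolding X_def \<omega>_def k_def by (simp add: algebra_simps power2_eq_square)
    have "1 + X \<le> exp X" by (rule exp_ge_add_one_self)
    have "1 \<le> (1 + X)*(1 - 5/12*k)"
    proof -
      have "(1 + X)*(1 - 5/12*k) = 1 + k^2*(19/720 - k/12)" unfolding Xk by (simp add: algebra_simps power2_eq_square)
      moreover have "0 \<le> k^2*(19/720 - k/12)" using kk unfolding k_def[symmetric] by simp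
      ultimately show ?thesis by simp
    qed
    moreover have "(1 + X)*(1 - 5/12*k) \<le> exp X * (1 - 5/12*k)"
      using \<open>1 + X \<le> exp X\<close> kk unfolding k_def[symmetric] by (intro mult_right_mono) auto
    ultimately have "1 \<le> exp X * (1 - 5/12*k)" by linarith
    then have "1 \<le> exp X * (1 - 5/12*K*T^2)" unfolding k_def by (simp add: algebra_simps)
    then show ?thesis by (simp add: divide_le_eq mult.commute)
  qed
  have "exp X * ((norm (z T))^2 - PiF T) \<le> (norm (z 0))^2" using mono Psi0 PsiT by simp
  then have "(norm (z T))^2 - PiF T \<le> (norm (z 0))^2 / exp X" by (simp add: le_divide_eq mult.commute)
  also have "\<dots> = (1/exp X) * (norm (z 0))^2" by simp
  also have "\<dots> \<le> (1 - 5/12*K*T^2) * (norm (z 0))^2" using expX by (intro mult_right_mono) auto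
  finally show ?thesis using PiT by simp
qed

lemma K_le_L4:
  fixes gV :: "'a::euclidean_space \<Rightarrow> 'a"
  assumes L: "L > 0"
    and c: "\<And>z y. norm (z - y) \<ge> R \<Longrightarrow>
             (z - y) \<bullet> (gV z - gV y) \<ge> K * (norm (z - y))\<^sup>2 + (1 / L) * (norm (gV z - gV y))\<^sup>2"
  shows "K \<le> L/4"
proof -
  define e :: 'a where "e = (SOME i. i \<in> Basis)"
  have ne: "norm e = 1" unfolding e_def using SOME_Basis by (simp add: norm_Basis)
  define n where "n = max R 1"
  have n1: "n \<ge> 1" unfolding n_def by simp
  define d where "d = n *\<^sub>R e"
  have nd: "norm d = n" unfolding d_def using ne n1 by simp
  define g where "g = gV d - gV 0"
  have "d \<bullet> g \<ge> K * n^2 + (1/L) * (norm g)^2"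
    using c[of d 0] nd unfolding g_def n_def by (simp add: n_def)
  moreover have "d \<bullet> g \<le> n * norm g" using Cauchy_Schwarz_ineq2[of d g] nd by simp
  moreover have "n * norm g - (1/L)*(norm g)^2 \<le> L/4 * n^2"
  proof -
    have "0 \<le> (1/L)*(norm g - L*n/2)^2" using L by simp
    also have "(1/L)*(norm g - L*n/2)^2 = L/4*n^2 - (n * norm g - (1/L)*(norm g)^2)"
      using L by (simp add: power2_eq_square field_simps)
    finally show ?thesis by simp
  qed
  ultimately have "K * n^2 \<le> L/4 * n^2" by simp
  then show ?thesis using n1 by simp
qed

lemma coupling_diff:
  fixes f :: "'a::euclidean_space \<Rightarrow> 'a \<Rightarrow> 'a"
  assumes cp: "coupling \<kappa> \<mu>1 \<mu>2"
    and i1: "integrable \<mu>1 (f x)" and i2: "integrable \<mu>2 (f x')"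
    and lip: "\<And>z y z' y'. norm (f z y - f z' y') \<le> Lt * (norm (z - z') + norm (y - y'))"
    and Lt: "Lt \<ge> 0"
  shows "ennreal (norm ((\<integral>u. f x u \<partial>\<mu>1) - (\<integral>u. f x' u \<partial>\<mu>2)))
     \<le> ennreal (Lt * norm (x - x')) + ennreal Lt * (\<integral>\<^sup>+ z. ennreal (norm (fst z - snd z)) \<partial>\<kappa>)"
proof -
  have ps: "prob_space \<kappa>" and sk: "sets \<kappa> = sets (borel \<Otimes>\<^sub>M borel)"
    and m1: "distr \<kappa> borel fst = \<mu>1" and m2: "distr \<kappa> borel snd = \<mu>2"
    using cp unfolding coupling_def by auto
  have mfst: "fst \<in> \<kappa> \<rightarrow>\<^sub>M (borel :: 'a measure)"
    using measurable_fst[of "borel :: 'a measure" "borel :: 'a measure"] measurable_cong_sets[OF sk refl] by blast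
  have msnd: "snd \<in> \<kappa> \<rightarrow>\<^sub>M (borel :: 'a measure)"
    using measurable_snd[of "borel :: 'a measure" "borel :: 'a measure"] measurable_cong_sets[OF sk refl] by blast
  have contf: "continuous_on UNIV (f y)" for y
  proof (rule lipschitz_on_continuous_on)
    show "Lt-lipschitz_on UNIV (f y)"
      unfolding lipschitz_on_def using Lt lip[of y _ y] by (auto simp: dist_norm)
  qed
  have bf: "f y \<in> borel_measurable borel" for y by (rule borel_measurable_continuous_onI[OF contf])
  have I1: "(\<integral>u. f x u \<partial>\<mu>1) = (\<integral>z. f x (fst z) \<partial>\<kappa>)"
    unfolding m1[symmetric] by (rule integral_distr[OF mfst bf])
  have I2: "(\<integral>u. f x' u \<partial>\<mu>2) = (\<integral>z. f x' (snd z) \<partial>\<kappa>)"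
    unfolding m2[symmetric] by (rule integral_distr[OF msnd bf])
  have j1: "integrable \<kappa> (\<lambda>z. f x (fst z))"
    using i1 unfolding m1[symmetric] integrable_distr_eq[OF mfst bf] .
  have j2: "integrable \<kappa> (\<lambda>z. f x' (snd z))"
    using i2 unfolding m2[symmetric] integrable_distr_eq[OF msnd bf] .
  have "(\<integral>u. f x u \<partial>\<mu>1) - (\<integral>u. f x' u \<partial>\<mu>2) = (\<integral>z. f x (fst z) - f x' (snd z) \<partial>\<kappa>)"
    unfolding I1 I2 by (rule Bochner_Integration.integral_diff[OF j1 j2, symmetric])
  then have "ennreal (norm ((\<integral>u. f x u \<partial>\<mu>1) - (\<integral>u. f x' u \<partial>\<mu>2)))
      \<le> (\<integral>\<^sup>+ z. ennreal (norm (f x (fst z) - f x' (snd z))) \<partial>\<kappa>)"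
    using integral_norm_bound_ennreal[OF Bochner_Integration.integrable_diff[OF j1 j2]] by simp
  also have "\<dots> \<le> (\<integral>\<^sup>+ z. ennreal (Lt * norm (x - x')) + ennreal Lt * ennreal (norm (fst z - snd z)) \<partial>\<kappa>)"
  proof (rule nn_integral_mono)
    fix z
    have "norm (f x (fst z) - f x' (snd z)) \<le> Lt * norm (x - x') + Lt * norm (fst z - snd z)"
      using lip[of x "fst z" x' "snd z"] by (simp add: algebra_simps)
    then show "ennreal (norm (f x (fst z) - f x' (snd z))) \<le> ennreal (Lt * norm (x - x')) + ennreal Lt * ennreal (norm (fst z - snd z))"
      using Lt by (simp add: ennreal_mult[symmetric] ennreal_plus[symmetric] del: ennreal_plus)
  qed
  also have "\<dots> = ennreal (Lt * norm (x - x')) + ennreal Lt * (\<integral>\<^sup>+ z. ennreal (norm (fst z - snd z)) \<partial>\<kappa>)"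
  proof -
    have mn: "(\<lambda>z. ennreal (norm (fst z - snd z))) \<in> borel_measurable \<kappa>"
      using mfst msnd by measurable
    have "(\<integral>\<^sup>+ z. ennreal (Lt * norm (x - x')) + ennreal Lt * ennreal (norm (fst z - snd z)) \<partial>\<kappa>)
        = (\<integral>\<^sup>+ z. ennreal (Lt * norm (x - x')) \<partial>\<kappa>) + (\<integral>\<^sup>+ z. ennreal Lt * ennreal (norm (fst z - snd z)) \<partial>\<kappa>)"
      by (rule nn_integral_add) (use mn in auto)
    also have "\<dots> = ennreal (Lt * norm (x - x')) + ennreal Lt * (\<integral>\<^sup>+ z. ennreal (norm (fst z - snd z)) \<partial>\<kappa>)"
      by (simp add: nn_integral_const nn_integral_cmult[OF mn] prob_space.emeasure_space_1[OF ps])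
    finally show ?thesis .
  qed
  finally show ?thesis .
qed

theorem mainTheorem7:
  fixes V :: "'a::euclidean_space \<Rightarrow> real" and gV :: "'a \<Rightarrow> 'a"
    and W :: "'a \<Rightarrow> 'a \<Rightarrow> real" and gW1 :: "'a \<Rightarrow> 'a \<Rightarrow> 'a"
    and L K R Lt T \<epsilon> :: real
    and \<mu> \<mu>' :: "'a measure"
    and q p q' p' :: "'a \<Rightarrow> 'a \<Rightarrow> real \<Rightarrow> 'a"
    and x x' v v' :: 'a
    and \<kappa> :: "real \<Rightarrow> ('a \<times> 'a) measure"
  assumes V_deriv: "\<And>z. (V has_derivative (\<lambda>h. gV z \<bullet> h)) (at z)"
    and W_deriv: "\<And>z y. ((\<lambda>u. W u y) has_derivative (\<lambda>h. gW1 z y \<bullet> h)) (at z)"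
    and W_C1: "continuous_on UNIV (\<lambda>z. gW1 (fst z) (snd z))"
    and const_pos: "L > 0" "K > 0" "R \<ge> 0" "Lt \<ge> 0"
    and a: "V 0 = 0" "\<And>z. V z \<ge> 0"
    and b: "\<And>z y. norm (gV z - gV y) \<le> L * norm (z - y)"
    and c: "\<And>z y. norm (z - y) \<ge> R \<Longrightarrow>
             (z - y) \<bullet> (gV z - gV y) \<ge> K * (norm (z - y))\<^sup>2 + (1 / L) * (norm (gV z - gV y))\<^sup>2"
    and d_sym: "\<And>z y. W z y = W y z"
    and d_lip: "\<And>z y z' y'. norm (gW1 z y - gW1 z' y') \<le> Lt * (norm (z - z') + norm (y - y'))"
    and T_pos: "T > 0" and eps_nonneg: "\<epsilon> \<ge> 0"
    and step: "(L + 2 * \<epsilon> * Lt) * T\<^sup>2 \<le> 1 / 4"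
    and eps_small: "\<epsilon> * Lt \<le> K / 3"
    and mu_prob: "prob_space \<mu>" "sets \<mu> = sets borel"
    and mu'_prob: "prob_space \<mu>'" "sets \<mu>' = sets borel"
    and flow: "dd_flow gV gW1 \<epsilon> \<mu> q p"
    and flow': "dd_flow gV gW1 \<epsilon> \<mu>' q' p'"
    and same_v: "v = v'"
    and coup: "\<And>s. s \<in> {0..T} \<Longrightarrow> coupling (\<kappa> s) (dd_law \<mu> q s) (dd_law \<mu>' q' s)"
  shows "ereal ((norm (q x v T - q' x' v' T))\<^sup>2)
     \<le> ereal ((1 - 5 / 12 * K * T\<^sup>2) * (norm (x - x'))\<^sup>2)
        + ereal (\<epsilon>\<^sup>2 * Lt\<^sup>2 * T ^ 4 * (7 / 6 + 3 / (2 * K * T\<^sup>2)))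
            * (SUP s\<in>{0..T}. coupling_cost (\<kappa> s))\<^sup>2
        + ereal ((2 * L + K) * R\<^sup>2 * T\<^sup>2)"
proof -
  define \<beta> where "\<beta> = \<epsilon> * Lt"
  define S where "S = (SUP s\<in>{0..T}. coupling_cost (\<kappa> s))"
  define C0 where "C0 = (2 * L + K) * R\<^sup>2"
  define cc where "cc = \<epsilon>\<^sup>2 * Lt\<^sup>2 * T ^ 4 * (7 / 6 + 3 / (2 * K * T\<^sup>2))"
  have L: "L > 0" and K: "K > 0" and R: "R \<ge> 0" and Lt: "Lt \<ge> 0" using const_pos by auto
  have be0: "\<beta> \<ge> 0" unfolding \<beta>_def using eps_nonneg Lt by simp
  have cc0: "cc \<ge> 0" unfolding cc_def using K T_pos by simp
  have cost0: "0 \<le> coupling_cost (\<kappa> s)" for s unfolding coupling_cost_def by simp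
  have costS: "coupling_cost (\<kappa> s) \<le> S" if "s \<in> {0..T}" for s
    unfolding S_def using that by (rule SUP_upper)
  have S0: "S \<ge> 0" using cost0[of 0] costS[of 0] T_pos by (meson atLeastAtMost_iff less_imp_le order_refl order_trans)
  show ?thesis
  proof (cases "\<beta> > 0 \<and> S = \<infinity>")
    case True
    then have "\<epsilon> > 0" "Lt > 0" using eps_nonneg Lt unfolding \<beta>_def
      by (auto simp: zero_less_mult_iff)
    then have "cc > 0" unfolding cc_def using K T_pos by (intro mult_pos_pos add_pos_pos divide_pos_pos) auto
    then have inf: "ereal cc * S\<^sup>2 = \<infinity>" using True by (simp add: power2_eq_square)
    have "ereal ((1 - 5 / 12 * K * T\<^sup>2) * (norm (x - x'))\<^sup>2) + ereal cc * S\<^sup>2 + ereal ((2 * L + K) * R\<^sup>2 * T\<^sup>2) = \<infinity>"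
      unfolding inf by simp
    then have eqi: "ereal ((1 - 5 / 12 * K * T\<^sup>2) * (norm (x - x'))\<^sup>2)
        + ereal (\<epsilon>\<^sup>2 * Lt\<^sup>2 * T ^ 4 * (7 / 6 + 3 / (2 * K * T\<^sup>2)))
            * (SUP s\<in>{0..T}. coupling_cost (\<kappa> s))\<^sup>2
        + ereal ((2 * L + K) * R\<^sup>2 * T\<^sup>2) = \<infinity>" unfolding cc_def S_def .
    show ?thesis by (subst eqi) simp
  next
    case False
    define M0 where "M0 = real_of_ereal S"
    have M0: "M0 \<ge> 0" unfolding M0_def using S0 by (simp add: real_of_ereal_pos)
    define z where "z = (\<lambda>t. q x v t - q' x' v' t)"
    define w where "w = (\<lambda>t. p x v t - p' x' v' t)"
    define a where "a = (\<lambda>t. gV (q x v t) - gV (q' x' v' t))"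
    define I where "I = (\<lambda>t. \<integral>u. gW1 (q x v t) u \<partial>dd_law \<mu> q t)"
    define I' where "I' = (\<lambda>t. \<integral>u. gW1 (q' x' v' t) u \<partial>dd_law \<mu>' q' t)"
    define b where "b = (\<lambda>t. \<epsilon> *\<^sub>R (I t - I' t))"
    have fl: "q x v 0 = x \<and> p x v 0 = v \<and>
       (\<forall>t\<ge>0. integrable (dd_law \<mu> q t) (\<lambda>u. gW1 (q x v t) u) \<and>
          (q x v has_vector_derivative p x v t) (at t within {0..}) \<and>
          (p x v has_vector_derivative
             (- gV (q x v t) - \<epsilon> *\<^sub>R I t)) (at t within {0..}))"
      using flow unfolding dd_flow_def I_def by blast
    have fl': "q' x' v' 0 = x' \<and> p' x' v' 0 = v' \<and>
       (\<forall>t\<ge>0. integrable (dd_law \<mu>' q' t) (\<lambda>u. gW1 (q' x' v' t) u) \<and>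
          (q' x' v' has_vector_derivative p' x' v' t) (at t within {0..}) \<and>
          (p' x' v' has_vector_derivative
             (- gV (q' x' v' t) - \<epsilon> *\<^sub>R I' t)) (at t within {0..}))"
      using flow' unfolding dd_flow_def I'_def by blast
    have dz: "(z has_vector_derivative w t) (at t within {0..})" if "t \<in> {0..T}" for t
      unfolding z_def w_def using fl fl' that by (auto intro!: has_vector_derivative_diff)
    have dw: "(w has_vector_derivative (-(a t + b t))) (at t within {0..})" if "t \<in> {0..T}" for t
    proof -
      have "(w has_vector_derivative ((- gV (q x v t) - \<epsilon> *\<^sub>R I t) - (- gV (q' x' v' t) - \<epsilon> *\<^sub>R I' t))) (at t within {0..})"
        unfolding w_def using fl fl' that by (auto intro!: has_vector_derivative_diff)
      then show ?thesis
        by (rule has_vector_derivative_eq_rhs) (simp add: a_def b_def algebra_simps scaleR_diff_right)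
    qed
    have w0: "w 0 = 0" unfolding w_def using fl fl' same_v by simp
    have z0: "z 0 = x - x'" unfolding z_def using fl fl' by simp
    have za: "z t \<bullet> a t \<ge> K*(norm (z t))^2 + (norm (a t))^2/L - C0" if "t \<in> {0..T}" for t
    proof (cases "norm (z t) \<ge> R")
      case True
      have h: "z t \<bullet> a t \<ge> K * (norm (z t))\<^sup>2 + (1 / L) * (norm (a t))\<^sup>2"
        using c[OF True[unfolded z_def]] unfolding z_def a_def .
      have "C0 \<ge> 0" unfolding C0_def using L K by simp
      then show ?thesis using h by simp
    next
      case False
      have an: "norm (a t) \<le> L * norm (z t)" unfolding a_def z_def by (rule b)
      have zR: "norm (z t) \<le> R" using False by simp
      have "(norm (a t))^2 \<le> (L * norm (z t))^2" using an by (simp add: power_mono)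
      then have a2: "(norm (a t))^2/L \<le> L * (norm (z t))^2" using L by (simp add: power2_eq_square field_simps)
      have z2: "(norm (z t))^2 \<le> R^2" using zR by (simp add: power_mono)
      have "- (norm (z t) * norm (a t)) \<le> z t \<bullet> a t"
        using Cauchy_Schwarz_ineq2[of "z t" "a t"] by linarith
      moreover have "norm (z t) * norm (a t) \<le> L * R^2"
      proof -
        have "norm (z t) * norm (a t) \<le> norm (z t) * (L * norm (z t))" using an by (simp add: mult_left_mono)
        also have "\<dots> = L * (norm (z t))^2" by (simp add: power2_eq_square)
        also have "\<dots> \<le> L * R^2" using z2 L by simp
        finally show ?thesis .
      qed
      moreover have "K*(norm (z t))^2 \<le> K*R^2" using z2 K by simp
      moreover have "L * (norm (z t))^2 \<le> L*R^2" using z2 L by simp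
      ultimately show ?thesis using a2 unfolding C0_def by (simp add: algebra_simps)
    qed
    have bb: "norm (b t) \<le> \<beta>*(norm (z t) + M0)" if t: "t \<in> {0..T}" for t
    proof -
      have t0: "t \<ge> 0" using t by simp
      define C where "C = (\<integral>\<^sup>+ zz. ennreal (norm (fst zz - snd zz)) \<partial>\<kappa> t)"
      have cd: "ennreal (norm (I t - I' t)) \<le> ennreal (Lt * norm (z t)) + ennreal Lt * C"
        unfolding I_def I'_def z_def C_def
        by (rule coupling_diff[OF coup[OF t]]) (use fl fl' t0 d_lip Lt in auto)
      show ?thesis
      proof (cases "\<epsilon> = 0 \<or> Lt = 0")
        case True
        then show ?thesis
        proof
          assume "\<epsilon> = 0" then show ?thesis unfolding b_def \<beta>_def using M0 by simp
        next
          assume Lt0: "Lt = 0"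
          then have "ennreal (norm (I t - I' t)) \<le> 0" using cd by simp
          then have "I t = I' t" by simp
          then show ?thesis unfolding b_def \<beta>_def using Lt0 by simp
        qed
      next
        case nz: False
        then have "\<beta> > 0" unfolding \<beta>_def using eps_nonneg Lt by (simp add: less_le)
        then have Sfin: "S \<noteq> \<infinity>" using False by simp
        have SM: "S = ereal M0" unfolding M0_def using S0 Sfin by (cases S) auto
        have "enn2ereal C \<le> ereal M0" using costS[OF t] SM unfolding coupling_cost_def C_def by simp
        then have CM: "C \<le> ennreal M0" using M0 by (simp add: less_eq_ennreal.rep_eq)
        have "ennreal (norm (I t - I' t)) \<le> ennreal (Lt * norm (z t)) + ennreal Lt * ennreal M0"
        proof -
          have "ennreal Lt * C \<le> ennreal Lt * ennreal M0" by (rule mult_left_mono[OF CM]) simp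
          then show ?thesis using cd by (meson add_left_mono order_trans)
        qed
        also have "\<dots> = ennreal (Lt * (norm (z t) + M0))"
          using Lt M0 by (simp add: ennreal_mult[symmetric] ennreal_plus[symmetric] algebra_simps del: ennreal_plus)
        finally have "norm (I t - I' t) \<le> Lt * (norm (z t) + M0)"
          using Lt M0 by (simp add: ennreal_le_iff)
        then have "\<epsilon> * norm (I t - I' t) \<le> \<epsilon> * (Lt * (norm (z t) + M0))"
          using eps_nonneg by (simp add: mult_left_mono)
        moreover have "norm (b t) = \<epsilon> * norm (I t - I' t)" unfolding b_def using eps_nonneg by simp
        ultimately show ?thesis unfolding \<beta>_def by (simp add: algebra_simps)
      qed
    qed
    have KL: "K \<le> L/4" by (rule K_le_L4[OF L c])
    have stepb: "(L + 2*\<beta>) * T^2 \<le> 1/4" using step unfolding \<beta>_def by (simp add: algebra_simps)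
    have bK: "\<beta> \<le> K/3" using eps_small unfolding \<beta>_def .
    have C00: "C0 \<ge> 0" unfolding C0_def using L K by simp
    have main: "(norm (z T))^2 \<le> (1 - 5/12*K*T^2)*(norm (z 0))^2 + \<beta>^2*M0^2*(7*T^4/6 + 3*T^2/(2*K)) + C0*T^2"
      by (rule ode_bound[OF K L T_pos be0 M0 C00 stepb bK KL dz dw w0 za bb])
    have ccM: "ereal (\<beta>^2*M0^2*(7*T^4/6 + 3*T^2/(2*K))) \<le> ereal cc * S\<^sup>2"
    proof (cases "S = \<infinity>")
      case True
      then have "M0 = 0" unfolding M0_def by simp
      moreover have "0 \<le> ereal cc * S\<^sup>2" using cc0 S0 by (simp add: ereal_zero_le_0_iff)
      ultimately show ?thesis by (simp add: zero_ereal_def)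
    next
      case Sf: False
      have SM: "S = ereal M0" unfolding M0_def using S0 Sf by (cases S) auto
      have e: "cc * M0^2 = \<beta>^2*M0^2*(7*T^4/6 + 3*T^2/(2*K))"
        unfolding cc_def \<beta>_def using K T_pos by (simp add: field_simps power2_eq_square power4_eq_xxxx)
      have e2: "ereal cc * S\<^sup>2 = ereal (cc * M0^2)" unfolding SM by (simp add: power2_eq_square)
      show ?thesis by (simp only: e2 e order_refl)
    qed
    have "ereal ((norm (q x v T - q' x' v' T))\<^sup>2)
        \<le> ereal ((1 - 5/12*K*T^2)*(norm (x - x'))^2) + ereal (\<beta>^2*M0^2*(7*T^4/6 + 3*T^2/(2*K))) + ereal (C0*T^2)"
      using main unfolding z0 by (simp add: z_def)
    also have "\<dots> \<le> ereal ((1 - 5/12*K*T^2)*(norm (x - x'))^2) + ereal cc * S\<^sup>2 + ereal (C0*T^2)"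
      using ccM by (intro add_mono) auto
    finally show ?thesis unfolding cc_def C0_def S_def by (simp add: algebra_simps)
  qed
qed

end
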